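(* Let $V\in L^\infty(\mathbb{R})$ with $\operatorname{ess\,inf}_{x\in\mathbb{R}}V(x)>0$, and suppose that $$m(V)=\lim_{a\to\infty}F(a;V)\quad\text{or}\quad m(V)=\lim_{a\to-\infty}F(a;V).$$ Let $p\in[1,\infty)$ and let $\mu\in L^p(\mathbb{R})+\mathcal{M}_1(\mathbb{R})$ be nonnegative in the sense that $\mu(u,u)\ge0$ for all $u\in H^1(\mathbb{R})$. Then $m(V+\mu)=m(V)$ and $M(V+\mu)\subset M(V)$.
   Context: Elements of $H^1(\mathbb{R})$ are identified with their continuous representatives; $\|u\|_\infty:=\|u\|_{L^\infty(\mathbb{R})}$. Let $X$ be the Banach space of all bounded symmetric bilinear maps $V:H^1(\mathbb{R})\times H^1(\mathbb{R})\to\mathbb{R}$. A function $W\in L^q(\mathbb{R})$ ($1\le q\le\infty$) is regarded as an element of $X$ via $W(u,v):=\int_{\mathbb{R}}W uv\,dx$; $\mathcal{M}_1(\mathbb{R})$ is the set of signed Radon measures on $\mathbb{R}$ with finite total variation, regarded as elements of $X$ via $\mu(u,v):=\int_{\mathbb{R}}uv\,d\mu$; $L^p(\mathbb{R})+\mathcal{M}_1(\mathbb{R})$ denotes the set of sums $\mu_0+\mu_1\in X$ with $\mu_0\in L^p(\mathbb{R})$, $\mu_1\in\mathcal{M}_1(\mathbb{R})$. For $V\in X$ and $u\in H^1(\mathbb{R})$ set $I(u;V):=\|u'\|_{L^2(\mathbb{R})}^2+V(u,u)$, $m(V):=\inf_{u\in H^1(\mathbb{R}),\,u\not\equiv0}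 I(u;V)/\|u\|_\infty^2$, and $M(V):=\{u\in H^1(\mathbb{R})\setminus\{0\}: I(u;V)/\|u\|_\infty^2=m(V)\}$. For $a\in\mathbb{R}$ let $K_a:=\{u\in H^1(\mathbb{R}):u(a)=\|u\|_\infty=1\}$ and $F(a;V):=\inf_{u\in K_a}I(u;V)$. *)

theory Defs
  imports "HOL-Analysis.Analysis"
begin

text \<open>In one dimension this is
  exactly H^1(R), each element identified with its continuous representative.\<close>
definition is_H1_deriv :: "(real \<Rightarrow> real) \<Rightarrow> (real \<Rightarrow> real) \<Rightarrow> bool" where
  "is_H1_deriv u g \<longleftrightarrow> g \<in> borel_measurable lborel \<and> integrable lborel (\<lambda>x. (g x)\<^sup>2) \<and>
     (\<forall>a b. a \<le> b \<longrightarrow> u b - u a = (LINT x:{a..b}|lborel. g x))"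

definition H1 :: "(real \<Rightarrow> real) set" where
  "H1 = {u. u \<in> borel_measurable lborel \<and> integrable lborel (\<lambda>x. (u x)\<^sup>2) \<and>
            (\<exists>g. is_H1_deriv u g)}"

definition H1_deriv :: "(real \<Rightarrow> real) \<Rightarrow> (real \<Rightarrow> real)" where
  "H1_deriv u = (SOME g. is_H1_deriv u g)"

text \<open>\<open>\<parallel>u'\<parallel>\<^sub>L\<^sub>2\<^sup>2\<close> (independent of the a.e.-unique choice of derivative).\<close>
definition dirichlet :: "(real \<Rightarrow> real) \<Rightarrow> real" where
  "dirichlet u = (LINT x|lborel. (H1_deriv u x)\<^sup>2)"

text \<open>sup norm (for continuous u equal to the essential sup norm).\<close>
definition sup_norm :: "(real \<Rightarrow> real) \<Rightarrow> real" where
  "sup_norm u = Sup (range (\<lambda>x. \<bar>u x\<bar>))"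

definition fun_form :: "(real \<Rightarrow> real) \<Rightarrow> (real \<Rightarrow> real) \<Rightarrow> real" where
  "fun_form W u = (LINT x|lborel. W x * (u x)\<^sup>2)"

definition meas_form :: "real measure \<Rightarrow> (real \<Rightarrow> real) \<Rightarrow> real" where
  "meas_form \<nu> u = (\<integral>x. (u x)\<^sup>2 \<partial>\<nu>)"

text \<open>Everything below depends on V \<in> X only through its quadratic form Q u = V(u,u).\<close>
definition Ifun :: "((real \<Rightarrow> real) \<Rightarrow> real) \<Rightarrow> (real \<Rightarrow> real) \<Rightarrow> real" where
  "Ifun Q u = dirichlet u + Q u"

definition mval :: "((real \<Rightarrow> real) \<Rightarrow> real) \<Rightarrow> real" where
  "mval Q = Inf {Ifun Q u / (sup_norm u)\<^sup>2 | u. u \<in> H1 \<and> u \<noteq> (\<lambda>x. 0)}"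

definition Mset :: "((real \<Rightarrow> real) \<Rightarrow> real) \<Rightarrow> (real \<Rightarrow> real) set" where
  "Mset Q = {u. u \<in> H1 \<and> u \<noteq> (\<lambda>x. 0) \<and> Ifun Q u / (sup_norm u)\<^sup>2 = mval Q}"

definition Kset :: "real \<Rightarrow> (real \<Rightarrow> real) set" where
  "Kset a = {u. u \<in> H1 \<and> u a = 1 \<and> sup_norm u = 1}"

definition Ffun :: "real \<Rightarrow> ((real \<Rightarrow> real) \<Rightarrow> real) \<Rightarrow> real" where
  "Ffun a Q = Inf (Ifun Q ` Kset a)"

end

theory Submission
  imports Defs
begin


definition ftc :: "(real \<Rightarrow> real) \<Rightarrow> (real \<Rightarrow> real) \<Rightarrow> bool" where
 "ftc u g \<longleftrightarrow> (\<forall>a b. set_integrable lborel {a..b} g) \<and>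
     (\<forall>a b. a \<le> b \<longrightarrow> u b - u a = (LINT x:{a..b}|lborel. g x))"

lemma abs_le_sq: "\<bar>y::real\<bar> \<le> 1 + y\<^sup>2"
proof (cases "\<bar>y\<bar> \<le> 1")
  case False
  then have "\<bar>y\<bar> \<le> \<bar>y\<bar> * \<bar>y\<bar>" by (intro mult_le_cancel_left1[THEN iffD2]) auto
  then show ?thesis by (simp add: power2_eq_square abs_mult[symmetric])
qed (simp add: add_increasing2)

lemma sq_loc_int:
  fixes g :: "real \<Rightarrow> real"
  assumes [measurable]: "g \<in> borel_measurable lborel" and i: "integrable lborel (\<lambda>x. (g x)\<^sup>2)"
  shows "set_integrable lborel {a..b} g"
  unfolding set_integrable_def
proof (rule Bochner_Integration.integrable_bound)
  show "integrable lborel (\<lambda>x. indicator {a..b} x + (g x)\<^sup>2 :: real)"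
    using i by (intro Bochner_Integration.integrable_add) (auto simp: emeasure_lborel_Icc_eq)
  show "(\<lambda>x. indicat_real {a..b} x *\<^sub>R g x) \<in> borel_measurable lborel" by measurable
  show "AE x in lborel. norm (indicat_real {a..b} x *\<^sub>R g x) \<le> norm (indicator {a..b} x + (g x)\<^sup>2 :: real)"
  proof (intro AE_I2)
    fix x
    have "\<bar>g x\<bar> \<le> 1 + (g x)\<^sup>2" by (rule abs_le_sq)
    then show "norm (indicat_real {a..b} x *\<^sub>R g x) \<le> norm (indicator {a..b} x + (g x)\<^sup>2 :: real)"
      by (cases "x \<in> {a..b}") auto
  qed
qed

lemma H1_ftc: "is_H1_deriv u g \<Longrightarrow> ftc u g"
  unfolding is_H1_deriv_def ftc_def using sq_loc_int by blast



lemma ftc_zero_AE: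
  fixes f :: "real \<Rightarrow> real"
  assumes f[measurable]: "f \<in> borel_measurable lborel"
    and li: "\<And>a b. set_integrable lborel {a..b} f"
    and z: "\<And>a b. a \<le> b \<Longrightarrow> (LINT x:{a..b}|lborel. f x) = 0"
  shows "AE x in lborel. f x = 0"
proof -
  have n: "AE x in lborel. f x * indicator {-real n..real n} x = 0" for n
  proof -
    define h where "h x = f x * indicator {-real n..real n} x" for x
    have hint: "integrable lborel h" using li[of "-real n" "real n"]
      unfolding h_def set_integrable_def by (simp add: mult.commute)
    have hm[measurable]: "h \<in> borel_measurable lborel" unfolding h_def by measurable
    have hz: "(LINT x:{t<..}|lborel. h x) = 0" for t
    proof -
      have "(LINT x:{t<..}|lborel. h x) = (LINT x:{t<..}\<inter>{-real n..real n}|lborel. f x)"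
        by (simp add: set_lebesgue_integral_def h_def indicator_inter_arith ac_simps)
      also have "\<dots> = 0"
      proof (cases "t < real n")
        case True
        have "(LINT x:{t<..}\<inter>{-real n..real n}|lborel. f x) = (LINT x:{max t (-real n)..real n}|lborel. f x)"
        proof (rule set_integral_cong_set)
          show "set_borel_measurable lborel ({t<..} \<inter> {-real n..real n}) f" 
            unfolding set_borel_measurable_def by measurable
          show "set_borel_measurable lborel {max t (-real n)..real n} f" 
            unfolding set_borel_measurable_def by measurable
          show "AE x in lborel. (x \<in> {max t (- real n)..real n}) = (x \<in> {t<..} \<inter> {- real n..real n})"
            using AE_lborel_singleton[of "max t (-real n)"] by eventually_elim auto
        qed
        also have "\<dots> = 0" using True by (intro z) auto
        finally show ?thesis .
      next
        case False
        then have "{t<..}\<inter>{-real n..real n} = {}" by auto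
        then show ?thesis by (simp add: set_lebesgue_integral_def)
      qed
      finally show ?thesis .
    qed
    define P where "P x = ennreal (max 0 (h x))" for x
    define N where "N x = ennreal (max 0 (- h x))" for x
    have hb[measurable]: "h \<in> borel_measurable borel" using hm by simp
    have Pm[measurable]: "P \<in> borel_measurable borel" "N \<in> borel_measurable borel"
      unfolding P_def N_def by measurable
    have ip: "integrable lborel (\<lambda>x. max 0 (h x))" using hint by (intro integrable_max) auto
    have in_: "integrable lborel (\<lambda>x. max 0 (- h x))" using hint by (intro integrable_max) auto
    have eqs: "emeasure (density lborel P) {t<..} = emeasure (density lborel N) {t<..}" for t
    proof -
      have a: "integrable lborel (\<lambda>x. max 0 (h x) * indicator {t<..} x)"
        using ip by (intro integrable_real_mult_indicator) auto
      have b: "integrable lborel (\<lambda>x. max 0 (- h x) * indicator {t<..} x)"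
        using in_ by (intro integrable_real_mult_indicator) auto
      have "emeasure (density lborel P) {t<..} = (\<integral>\<^sup>+x. ennreal (max 0 (h x) * indicator {t<..} x) \<partial>lborel)"
        by (subst emeasure_density) (auto simp: P_def ennreal_mult'' ennreal_indicator intro!: nn_integral_cong)
      also have "\<dots> = ennreal (\<integral>x. max 0 (h x) * indicator {t<..} x \<partial>lborel)"
        by (rule nn_integral_eq_integral[OF a]) auto
      also have "(\<integral>x. max 0 (h x) * indicator {t<..} x \<partial>lborel) = (\<integral>x. max 0 (- h x) * indicator {t<..} x \<partial>lborel)"
      proof -
        have "(\<integral>x. max 0 (h x) * indicator {t<..} x \<partial>lborel) - (\<integral>x. max 0 (- h x) * indicator {t<..} x \<partial>lborel)
             = (\<integral>x. max 0 (h x) * indicator {t<..} x - max 0 (- h x) * indicator {t<..} x \<partial>lborel)"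
          using a b by simp
        also have "\<dots> = (LINT x:{t<..}|lborel. h x)"
          unfolding set_lebesgue_integral_def
          by (intro Bochner_Integration.integral_cong) (auto simp: indicator_def max_def)
        finally show ?thesis using hz by simp
      qed
      also have "ennreal (\<integral>x. max 0 (- h x) * indicator {t<..} x \<partial>lborel) = (\<integral>\<^sup>+x. ennreal (max 0 (- h x) * indicator {t<..} x) \<partial>lborel)"
        by (rule nn_integral_eq_integral[OF b, symmetric]) auto
      also have "\<dots> = emeasure (density lborel N) {t<..}"
        by (subst emeasure_density) (auto simp: N_def ennreal_mult'' ennreal_indicator intro!: nn_integral_cong)
      finally show ?thesis .
    qed
    have "density lborel P = density lborel N"
    proof (rule measure_eqI_lessThan)
      show "sets (density lborel P) = sets borel" "sets (density lborel N) = sets borel" by auto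
      show "emeasure (density lborel P) {x<..} < \<infinity>" for x
      proof -
        have "emeasure (density lborel P) {x<..} \<le> emeasure (density lborel P) UNIV"
          by (intro emeasure_mono) auto
        also have "\<dots> = (\<integral>\<^sup>+y. P y \<partial>lborel)" by (simp add: emeasure_density)
        also have "\<dots> < \<infinity>" unfolding P_def using ip
          by (simp add: nn_integral_eq_integral less_top[symmetric])
        finally show ?thesis .
      qed
    qed (rule eqs)
    then have "AE x in lborel. P x = N x"
      by (intro sigma_finite_measure.density_unique[OF sigma_finite_lborel]) auto
    then show ?thesis
      by eventually_elim (auto simp: P_def N_def h_def max_def split: if_splits)
  qed
  then have "AE x in lborel. \<forall>n::nat. f x * indicator {-real n..real n} x = 0"
    using n by (subst AE_all_countable) blast
  then show ?thesis
  proof eventually_elim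
    case (elim x)
    obtain n :: nat where "\<bar>x\<bar> \<le> real n" using real_arch_simple by blast
    then have "x \<in> {-real n..real n}" by auto
    with elim[rule_format, of n] show ?case by simp
  qed
qed



lemma H1_deriv_unique:
  assumes "is_H1_deriv u g1" "is_H1_deriv u g2"
  shows "AE x in lborel. g1 x = g2 x"
proof -
  have f1: "ftc u g1" "ftc u g2" using assms H1_ftc by auto
  have m[measurable]: "g1 \<in> borel_measurable lborel" "g2 \<in> borel_measurable lborel"
    using assms unfolding is_H1_deriv_def by auto
  have "AE x in lborel. g1 x - g2 x = 0"
  proof (rule ftc_zero_AE)
    show "(\<lambda>x. g1 x - g2 x) \<in> borel_measurable lborel" by measurable
    show "set_integrable lborel {a..b} (\<lambda>x. g1 x - g2 x)" for a b
      using f1 unfolding ftc_def by auto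
    show "(LINT x:{a..b}|lborel. g1 x - g2 x) = 0" if "a \<le> b" for a b
      using f1 that unfolding ftc_def by (subst set_integral_diff(2)) auto
  qed
  then show ?thesis by auto
qed

lemma dirichlet_eq:
  assumes "is_H1_deriv u g"
  shows "dirichlet u = (LINT x|lborel. (g x)\<^sup>2)"
proof -
  have hd: "is_H1_deriv u (H1_deriv u)" unfolding H1_deriv_def using someI[of "is_H1_deriv u", OF assms] .
  moreover have "H1_deriv u \<in> borel_measurable lborel" "g \<in> borel_measurable lborel"
    using hd assms unfolding is_H1_deriv_def by auto
  ultimately show ?thesis using H1_deriv_unique[OF hd assms]
    unfolding dirichlet_def by (intro integral_cong_AE) (auto elim: AE_mp)
qed

lemma ftc_const: "ftc (\<lambda>x. k) (\<lambda>x. 0)"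
  unfolding ftc_def by (auto simp: set_integrable_def set_lebesgue_integral_def)

lemma ftc_lin: "ftc (\<lambda>x. k * x + l) (\<lambda>x. k)"
  unfolding ftc_def
proof (intro conjI allI impI)
  fix a b :: real
  show "set_integrable lborel {a..b} (\<lambda>x. k)"
    unfolding set_integrable_def
  proof -
    have "integrable lborel (\<lambda>x. k * indicator {a..b} x)"
      by (intro integrable_mult_right integrable_real_indicator) (auto simp: emeasure_lborel_Icc_eq)
    then show "integrable lborel (\<lambda>x. indicat_real {a..b} x *\<^sub>R k)"
      by (simp add: mult.commute)
  qed
  assume "a \<le> b"
  then show "k * b + l - (k * a + l) = (LINT x:{a..b}|lborel. k)"
    by (subst set_integral_const) (auto simp: emeasure_lborel_Icc_eq algebra_simps)
qed



lemma ftc_glue: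
  assumes f1: "ftc u1 g1" and f2: "ftc u2 g2" and c: "u1 c = u2 c"
  shows "ftc (\<lambda>x. if x \<le> c then u1 x else u2 x) (\<lambda>x. if x \<le> c then g1 x else g2 x)"
  unfolding ftc_def
proof (intro conjI allI impI)
  fix a b :: real
  have li1: "\<And>a b. set_integrable lborel {a..b} g1" using f1 unfolding ftc_def by blast
  have li2: "\<And>a b. set_integrable lborel {a..b} g2" using f2 unfolding ftc_def by blast
  have i1: "set_integrable lborel ({a..b} \<inter> {..c}) g1"
    using li1 by (rule set_integrable_subset[of _ "{a..b}"]) auto
  have i2: "set_integrable lborel ({a..b} \<inter> {c<..}) g2"
    using li2 by (rule set_integrable_subset[of _ "{a..b}"]) auto
  have "integrable lborel (\<lambda>x. indicator ({a..b} \<inter> {..c}) x *\<^sub>R g1 x + indicator ({a..b} \<inter> {c<..}) x *\<^sub>R g2 x)"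
    using i1 i2 unfolding set_integrable_def by auto
  then show "set_integrable lborel {a..b} (\<lambda>x. if x \<le> c then g1 x else g2 x)"
    unfolding set_integrable_def
    by (rule Bochner_Integration.integrable_cong[THEN iffD1, rotated -1]) (auto simp: indicator_def)
next
  fix a b :: real
  have li1: "\<And>a b. set_integrable lborel {a..b} g1" using f1 unfolding ftc_def by blast
  have li2: "\<And>a b. set_integrable lborel {a..b} g2" using f2 unfolding ftc_def by blast
  assume ab: "a \<le> b"
  let ?d = "\<lambda>x. if x \<le> c then g1 x else g2 x"
  show "(if b \<le> c then u1 b else u2 b) - (if a \<le> c then u1 a else u2 a) = (LINT x:{a..b}|lborel. ?d x)"
  proof (cases "b \<le> c")
    case True
    have "(LINT x:{a..b}|lborel. ?d x) = (LINT x:{a..b}|lborel. g1 x)"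
      using True by (intro set_lebesgue_integral_cong) auto
    moreover have "u1 b - u1 a = (LINT x:{a..b}|lborel. g1 x)" using ab f1 unfolding ftc_def by blast
    ultimately show ?thesis using True ab by auto
  next
    case bc: False
    show ?thesis
    proof (cases "c < a")
      case True
      have "(LINT x:{a..b}|lborel. ?d x) = (LINT x:{a..b}|lborel. g2 x)"
        using True by (intro set_lebesgue_integral_cong) auto
      moreover have "u2 b - u2 a = (LINT x:{a..b}|lborel. g2 x)" using ab f2 unfolding ftc_def by blast
      ultimately show ?thesis using True ab bc by auto
    next
      case False
      then have ac: "a \<le> c" by simp
      have s1: "set_integrable lborel {a..c} ?d"
      proof -
        have "set_integrable lborel {a..c} g1" using li1 by blast
        then show ?thesis unfolding set_integrable_def
          by (rule Bochner_Integration.integrable_cong[THEN iffD1, rotated -1]) (auto simp: indicator_def)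
      qed
      have s2: "set_integrable lborel {c<..b} ?d"
      proof -
        have "set_integrable lborel {c<..b} g2" using li2
          by (rule set_integrable_subset[of _ "{c..b}"]) auto
        then show ?thesis unfolding set_integrable_def
          by (rule Bochner_Integration.integrable_cong[THEN iffD1, rotated -1]) (auto simp: indicator_def)
      qed
      have "{a..b} = {a..c} \<union> {c<..b}" using ac bc by auto
      then have "(LINT x:{a..b}|lborel. ?d x) = (LINT x:{a..c}|lborel. ?d x) + (LINT x:{c<..b}|lborel. ?d x)"
        using s1 s2 by (simp only:) (rule set_integral_Un, auto)
      also have "(LINT x:{a..c}|lborel. ?d x) = (LINT x:{a..c}|lborel. g1 x)"
        by (intro set_lebesgue_integral_cong) auto
      also have "(LINT x:{c<..b}|lborel. ?d x) = (LINT x:{c<..b}|lborel. g2 x)"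
        by (intro set_lebesgue_integral_cong) auto
      also have "(LINT x:{c<..b}|lborel. g2 x) = (LINT x:{c..b}|lborel. g2 x)"
      proof (rule set_integral_cong_set)
        have "set_integrable lborel {c..b} g2" using li2 by blast
        then show "set_borel_measurable lborel {c..b} g2"
          by (simp add: set_borel_measurable_def set_integrable_def)
        have "set_integrable lborel {c<..b} g2" using li2
          by (rule set_integrable_subset[of _ "{c..b}"]) auto
        then show "set_borel_measurable lborel {c<..b} g2"
          by (simp add: set_borel_measurable_def set_integrable_def)
        show "AE x in lborel. (x \<in> {c..b}) = (x \<in> {c<..b})"
          using AE_lborel_singleton[of c] by eventually_elim auto
      qed
      finally have eq: "(LINT x:{a..b}|lborel. ?d x) = (LINT x:{a..c}|lborel. g1 x) + (LINT x:{c..b}|lborel. g2 x)" .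
      moreover have "u1 c - u1 a = (LINT x:{a..c}|lborel. g1 x)" using ac f1 unfolding ftc_def by blast
      moreover have "u2 b - u2 c = (LINT x:{c..b}|lborel. g2 x)" using bc f2 unfolding ftc_def by (meson less_eq_real_def not_le)
      ultimately show ?thesis using ac bc c by auto
    qed
  qed
qed




lemma H1_bounded:
  assumes "u \<in> H1"
  shows "\<exists>B. \<forall>x. \<bar>u x\<bar> \<le> B"
proof -
  from assms obtain g where um[measurable]: "u \<in> borel_measurable lborel"
    and ui: "integrable lborel (\<lambda>x. (u x)\<^sup>2)" and gd: "is_H1_deriv u g"
    unfolding H1_def by auto
  have gm[measurable]: "g \<in> borel_measurable lborel" and gi: "integrable lborel (\<lambda>x. (g x)\<^sup>2)"
    and fi: "\<And>a b. a \<le> b \<Longrightarrow> u b - u a = (LINT x:{a..b}|lborel. g x)"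
    using gd unfolding is_H1_deriv_def by auto
  have li: "\<And>a b. set_integrable lborel {a..b} g" using H1_ftc[OF gd] unfolding ftc_def by blast
  define G where "G = (LINT x|lborel. (g x)\<^sup>2)"
  define S where "S = (LINT x|lborel. (u x)\<^sup>2)"
  define K where "K = 1 + G"
  have osc: "\<bar>u y - u x\<bar> \<le> K" if "x \<le> y" "y \<le> x + 1" for x y
  proof -
    have "\<bar>u y - u x\<bar> = \<bar>LINT t:{x..y}|lborel. g t\<bar>" using fi[OF that(1)] by simp
    also have "\<dots> \<le> (LINT t:{x..y}|lborel. \<bar>g t\<bar>)"
      using set_integral_norm_bound[OF li[of x y]] by simp
    also have "\<dots> = (LINT t|lborel. indicator {x..y} t * \<bar>g t\<bar>)"
      by (simp add: set_lebesgue_integral_def)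
    also have "\<dots> \<le> (LINT t|lborel. indicator {x..y} t + (g t)\<^sup>2)"
    proof (rule integral_mono)
      show "integrable lborel (\<lambda>t. indicat_real {x..y} t * \<bar>g t\<bar>)"
      proof -
        have "integrable lborel (\<lambda>t. indicat_real {x..y} t * g t)"
          using li[of x y] unfolding set_integrable_def by simp
        from integrable_abs[OF this] show ?thesis by (simp add: abs_mult)
      qed
      show "integrable lborel (\<lambda>t. indicat_real {x..y} t + (g t)\<^sup>2)"
        using gi by (intro Bochner_Integration.integrable_add) (auto simp: emeasure_lborel_Icc_eq)
      show "indicat_real {x..y} t * \<bar>g t\<bar> \<le> indicat_real {x..y} t + (g t)\<^sup>2" for t
        using abs_le_sq[of "g t"] by (cases "t \<in> {x..y}") auto
    qed
    also have "\<dots> = (y - x) + G"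
      using gi that by (subst Bochner_Integration.integral_add) (auto simp: G_def emeasure_lborel_Icc_eq)
    also have "\<dots> \<le> K" using that by (simp add: K_def)
    finally show ?thesis .
  qed
  have "\<bar>u x\<bar> \<le> K + sqrt S" for x
  proof (cases "\<bar>u x\<bar> \<le> K")
    case True
    have "0 \<le> S" unfolding S_def by simp
    then show ?thesis using True real_sqrt_ge_zero[of S] by linarith
  next
    case False
    have "(\<bar>u x\<bar> - K)\<^sup>2 = (LINT t|lborel. indicator {x..x+1} t * (\<bar>u x\<bar> - K)\<^sup>2)"
      by (simp add: emeasure_lborel_Icc_eq)
    also have "\<dots> \<le> (LINT t|lborel. (u t)\<^sup>2)"
    proof (rule integral_mono)
      show "integrable lborel (\<lambda>t. indicat_real {x..x+1} t * (\<bar>u x\<bar> - K)\<^sup>2)"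
        by (intro integrable_mult_left integrable_real_indicator) (auto simp: emeasure_lborel_Icc_eq)
      show "integrable lborel (\<lambda>t. (u t)\<^sup>2)" by (rule ui)
      show "indicat_real {x..x+1} t * (\<bar>u x\<bar> - K)\<^sup>2 \<le> (u t)\<^sup>2" for t
      proof (cases "t \<in> {x..x+1}")
        case True
        then have "\<bar>u t - u x\<bar> \<le> K" using osc by auto
        then have "\<bar>u x\<bar> - K \<le> \<bar>u t\<bar>" by linarith
        moreover have "0 \<le> \<bar>u x\<bar> - K" using False by simp
        ultimately have "(\<bar>u x\<bar> - K)\<^sup>2 \<le> \<bar>u t\<bar>\<^sup>2" by (intro power_mono) auto
        then show ?thesis using True by simp
      qed simp
    qed
    finally have "(\<bar>u x\<bar> - K)\<^sup>2 \<le> S" unfolding S_def .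
    then have "\<bar>\<bar>u x\<bar> - K\<bar> \<le> sqrt S" using real_le_rsqrt by fastforce
    then show ?thesis by linarith
  qed
  then show ?thesis by blast
qed

lemma H1_sup_norm_le:
  assumes "u \<in> H1"
  shows "\<bar>u x\<bar> \<le> sup_norm u"
proof -
  obtain B where "\<forall>x. \<bar>u x\<bar> \<le> B" using H1_bounded[OF assms] by blast
  then have "bdd_above (range (\<lambda>x. \<bar>u x\<bar>))" by (auto intro: bdd_aboveI2)
  then show ?thesis unfolding sup_norm_def by (intro cSup_upper) auto
qed

lemma sup_norm_eq1:
  assumes "\<And>x. \<bar>w x\<bar> \<le> 1" and "w a = 1"
  shows "sup_norm w = 1"
  unfolding sup_norm_def
proof (rule cSup_eq_maximum)
  show "1 \<in> range (\<lambda>x. \<bar>w x\<bar>)" using assms(2) by (auto intro!: image_eqI[of _ _ a])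
qed (use assms(1) in auto)

lemma mk_H1:
  assumes "ftc u g" and [measurable]: "u \<in> borel_measurable lborel" "g \<in> borel_measurable lborel"
    and "integrable lborel (\<lambda>x. (u x)\<^sup>2)" "integrable lborel (\<lambda>x. (g x)\<^sup>2)"
  shows "u \<in> H1" "is_H1_deriv u g"
proof -
  show "is_H1_deriv u g" using assms unfolding is_H1_deriv_def ftc_def by blast
  then show "u \<in> H1" using assms unfolding H1_def by blast
qed

lemma sq_bound_integrable:
  fixes f h :: "real \<Rightarrow> real"
  assumes [measurable]: "f \<in> borel_measurable lborel" and "integrable lborel h"
    and "\<And>x. (f x)\<^sup>2 \<le> h x"
  shows "integrable lborel (\<lambda>x. (f x)\<^sup>2)"
proof (rule Bochner_Integration.integrable_bound[OF assms(2)])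
  show "AE x in lborel. norm ((f x)\<^sup>2) \<le> norm (h x)"
  proof (rule AE_I2)
    fix x
    have "norm ((f x)\<^sup>2) = (f x)\<^sup>2" by simp
    also have "\<dots> \<le> h x" by (rule assms(3))
    also have "\<dots> \<le> norm (h x)" by simp
    finally show "norm ((f x)\<^sup>2) \<le> norm (h x)" .
  qed
qed measurable



definition tent :: "real \<Rightarrow> real \<Rightarrow> real" where
  "tent a = (\<lambda>x. if x \<le> a then (if x \<le> a - 1 then 0 else 1 * x + (1 - a))
                 else (if x \<le> a + 1 then (-1) * x + (a + 1) else 0))"
definition dtent :: "real \<Rightarrow> real \<Rightarrow> real" where
  "dtent a = (\<lambda>x. if x \<le> a then (if x \<le> a - 1 then 0 else 1)
                 else (if x \<le> a + 1 then -1 else 0))"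

lemma tent_ftc: "ftc (tent a) (dtent a)"
  unfolding tent_def dtent_def
  by (intro ftc_glue ftc_const ftc_lin) (auto simp: algebra_simps)

lemma tent_bounds:
  "\<bar>tent a x\<bar> \<le> 1" "(tent a x)\<^sup>2 \<le> indicator {a-1..a+1} x" "(dtent a x)\<^sup>2 \<le> indicator {a-1..a+1} x"
  unfolding tent_def dtent_def
  by (auto simp: indicator_def abs_le_iff power2_eq_square mult_le_one)

lemma tent_meas[measurable]: "tent a \<in> borel_measurable lborel" "dtent a \<in> borel_measurable lborel"
  unfolding tent_def dtent_def by measurable

lemma ind_int: "integrable lborel (indicat_real {s..t::real})"
  by (rule integrable_real_indicator) (auto simp: emeasure_lborel_Icc_eq)

lemma tent_H1: "tent a \<in> H1" "is_H1_deriv (tent a) (dtent a)"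
proof -
  have "integrable lborel (\<lambda>x. (tent a x)\<^sup>2)"
    by (rule sq_bound_integrable[OF _ ind_int]) (auto intro: tent_bounds)
  moreover have "integrable lborel (\<lambda>x. (dtent a x)\<^sup>2)"
    by (rule sq_bound_integrable[OF _ ind_int]) (auto intro: tent_bounds)
  ultimately show "tent a \<in> H1" "is_H1_deriv (tent a) (dtent a)"
    using mk_H1[OF tent_ftc] by auto
qed

lemma tent_Kset: "tent a \<in> Kset a"
proof -
  have "tent a a = 1" unfolding tent_def by simp
  then show ?thesis unfolding Kset_def using tent_H1 sup_norm_eq1[of "tent a" a] tent_bounds(1)
    by auto
qed



definition cutR :: "(real \<Rightarrow> real) \<Rightarrow> real \<Rightarrow> real \<Rightarrow> real" where
  "cutR u c = (\<lambda>x. if x \<le> c then (if x \<le> c - 1 then 0 else u c * x + u c * (1 - c)) else u x)"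
definition dcutR :: "(real \<Rightarrow> real) \<Rightarrow> (real \<Rightarrow> real) \<Rightarrow> real \<Rightarrow> real \<Rightarrow> real" where
  "dcutR u g c = (\<lambda>x. if x \<le> c then (if x \<le> c - 1 then 0 else u c) else g x)"
definition cutL :: "(real \<Rightarrow> real) \<Rightarrow> real \<Rightarrow> real \<Rightarrow> real" where
  "cutL u c = (\<lambda>x. if x \<le> c then u x else (if x \<le> c + 1 then (- u c) * x + u c * (1 + c) else 0))"
definition dcutL :: "(real \<Rightarrow> real) \<Rightarrow> (real \<Rightarrow> real) \<Rightarrow> real \<Rightarrow> real \<Rightarrow> real" where
  "dcutL u g c = (\<lambda>x. if x \<le> c then g x else (if x \<le> c + 1 then - u c else 0))"

lemma cutR_ftc: "ftc u g \<Longrightarrow> ftc (cutR u c) (dcutR u g c)"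
  unfolding cutR_def dcutR_def
  by (intro ftc_glue ftc_const ftc_lin) (auto simp: algebra_simps)

lemma cutL_ftc: "ftc u g \<Longrightarrow> ftc (cutL u c) (dcutL u g c)"
  unfolding cutL_def dcutL_def
  by (intro ftc_glue ftc_const ftc_lin) (auto simp: algebra_simps)

lemma sq_scale_le: "0 \<le> t \<Longrightarrow> t \<le> 1 \<Longrightarrow> (y * t)\<^sup>2 \<le> (y::real)\<^sup>2"
proof -
  assume "0 \<le> t" "t \<le> 1"
  then have "t\<^sup>2 \<le> 1" by (simp add: power_le_one)
  then have "y\<^sup>2 * t\<^sup>2 \<le> y\<^sup>2 * 1" by (intro mult_left_mono) auto
  then show ?thesis by (simp add: power_mult_distrib)
qed

lemma cutR_bounds:
  "(cutR u c x)\<^sup>2 \<le> (u x)\<^sup>2 + (u c)\<^sup>2 * indicator {c-1..c} x"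
  "(dcutR u g c x)\<^sup>2 \<le> (g x)\<^sup>2 + (u c)\<^sup>2 * indicator {c-1..c} x"
proof -
  have m: "(u c * x + u c * (1 - c))\<^sup>2 \<le> (u c)\<^sup>2" if "c - 1 < x" "x \<le> c"
  proof -
    have "u c * x + u c * (1 - c) = u c * (x - c + 1)" by (simp add: algebra_simps)
    then show ?thesis using sq_scale_le[of "x - c + 1" "u c"] that by simp
  qed
  show "(cutR u c x)\<^sup>2 \<le> (u x)\<^sup>2 + (u c)\<^sup>2 * indicator {c-1..c} x"
    unfolding cutR_def using m by (auto simp: indicator_def intro!: add_increasing)
  show "(dcutR u g c x)\<^sup>2 \<le> (g x)\<^sup>2 + (u c)\<^sup>2 * indicator {c-1..c} x"
    unfolding dcutR_def by (auto simp: indicator_def)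
qed

lemma cutL_bounds:
  "(cutL u c x)\<^sup>2 \<le> (u x)\<^sup>2 + (u c)\<^sup>2 * indicator {c..c+1} x"
  "(dcutL u g c x)\<^sup>2 \<le> (g x)\<^sup>2 + (u c)\<^sup>2 * indicator {c..c+1} x"
proof -
  have m: "((- u c) * x + u c * (1 + c))\<^sup>2 \<le> (u c)\<^sup>2" if "c < x" "x \<le> c + 1"
  proof -
    have "(- u c) * x + u c * (1 + c) = u c * (1 + c - x)" by (simp add: algebra_simps)
    then show ?thesis using sq_scale_le[of "1 + c - x" "u c"] that by simp
  qed
  show "(cutL u c x)\<^sup>2 \<le> (u x)\<^sup>2 + (u c)\<^sup>2 * indicator {c..c+1} x"
    unfolding cutL_def using m by (auto simp: indicator_def intro!: add_increasing)
  show "(dcutL u g c x)\<^sup>2 \<le> (g x)\<^sup>2 + (u c)\<^sup>2 * indicator {c..c+1} x"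
    unfolding dcutL_def by (auto simp: indicator_def)
qed

lemma cutR_abs: "(\<And>y. \<bar>u y\<bar> \<le> 1) \<Longrightarrow> \<bar>cutR u c x\<bar> \<le> 1"
proof -
  assume a: "\<And>y. \<bar>u y\<bar> \<le> 1"
  have "(cutR u c x)\<^sup>2 \<le> 1"
  proof (cases "c - 1 < x \<and> x \<le> c")
    case True
    have "u c * x + u c * (1 - c) = u c * (x - c + 1)" by (simp add: algebra_simps)
    moreover have "(u c * (x - c + 1))\<^sup>2 \<le> (u c)\<^sup>2" using sq_scale_le[of "x - c + 1" "u c"] True by simp
    moreover have "(u c)\<^sup>2 \<le> 1" using a[of c] by (simp add: abs_le_square_iff[of _ 1, simplified])
    ultimately show ?thesis using True unfolding cutR_def by auto
  next
    case False
    have "(u x)\<^sup>2 \<le> 1" using a[of x] by (simp add: abs_le_square_iff[of _ 1, simplified])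
    then show ?thesis using False unfolding cutR_def by auto
  qed
  then show ?thesis by (simp add: abs_le_square_iff[of _ 1, simplified])
qed

lemma cutL_abs: "(\<And>y. \<bar>u y\<bar> \<le> 1) \<Longrightarrow> \<bar>cutL u c x\<bar> \<le> 1"
proof -
  assume a: "\<And>y. \<bar>u y\<bar> \<le> 1"
  have "(cutL u c x)\<^sup>2 \<le> 1"
  proof (cases "c < x \<and> x \<le> c + 1")
    case True
    have "(- u c) * x + u c * (1 + c) = u c * (1 + c - x)" by (simp add: algebra_simps)
    moreover have "(u c * (1 + c - x))\<^sup>2 \<le> (u c)\<^sup>2" using sq_scale_le[of "1 + c - x" "u c"] True by simp
    moreover have "(u c)\<^sup>2 \<le> 1" using a[of c] by (simp add: abs_le_square_iff[of _ 1, simplified])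
    ultimately show ?thesis using True unfolding cutL_def by auto
  next
    case False
    have "(u x)\<^sup>2 \<le> 1" using a[of x] by (simp add: abs_le_square_iff[of _ 1, simplified])
    then show ?thesis using False unfolding cutL_def by auto
  qed
  then show ?thesis by (simp add: abs_le_square_iff[of _ 1, simplified])
qed



lemma Vmul_int:
  fixes V f :: "real \<Rightarrow> real"
  assumes [measurable]: "V \<in> borel_measurable lborel" and B: "AE x in lborel. \<bar>V x\<bar> \<le> B"
    and f: "integrable lborel f"
  shows "integrable lborel (\<lambda>x. V x * f x)"
proof (rule Bochner_Integration.integrable_bound)
  show "integrable lborel (\<lambda>x. B * f x)" using f by simp
  show "(\<lambda>x. V x * f x) \<in> borel_measurable lborel" using f by measurable
  show "AE x in lborel. norm (V x * f x) \<le> norm (B * f x)"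
    using B
  proof eventually_elim
    case (elim x)
    then have "\<bar>V x\<bar> \<le> \<bar>B\<bar>" by simp
    then show ?case by (simp add: abs_mult mult_right_mono)
  qed
qed

lemma H1_sq_int: "u \<in> H1 \<Longrightarrow> integrable lborel (\<lambda>x. (u x)\<^sup>2)"
  unfolding H1_def by auto

lemma H1_meas: "u \<in> H1 \<Longrightarrow> u \<in> borel_measurable lborel"
  unfolding H1_def by auto

lemma fun_form_lower:
  fixes V :: "real \<Rightarrow> real"
  assumes [measurable]: "V \<in> borel_measurable lborel" and B: "AE x in lborel. \<bar>V x\<bar> \<le> B"
    and c: "AE x in lborel. c0 \<le> V x" and u: "u \<in> H1"
  shows "c0 * (LINT x|lborel. (u x)\<^sup>2) \<le> fun_form V u"
proof -
  have "c0 * (LINT x|lborel. (u x)\<^sup>2) = (LINT x|lborel. c0 * (u x)\<^sup>2)" by simp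
  also have "\<dots> \<le> (LINT x|lborel. V x * (u x)\<^sup>2)"
  proof (rule integral_mono_AE)
    show "integrable lborel (\<lambda>x. c0 * (u x)\<^sup>2)" using H1_sq_int[OF u] by simp
    show "integrable lborel (\<lambda>x. V x * (u x)\<^sup>2)" by (rule Vmul_int[OF _ B H1_sq_int[OF u]]) simp
    show "AE x in lborel. c0 * (u x)\<^sup>2 \<le> V x * (u x)\<^sup>2" using c
      by eventually_elim (simp add: mult_right_mono)
  qed
  finally show ?thesis unfolding fun_form_def .
qed

lemma energy:
  fixes V :: "real \<Rightarrow> real"
  assumes [measurable]: "V \<in> borel_measurable lborel"
    and VB: "AE x in lborel. 0 \<le> V x \<and> V x \<le> B"
    and u: "u \<in> H1" "is_H1_deriv u g" and w: "w \<in> H1" "is_H1_deriv w d"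
    and bd: "\<And>x. (d x)\<^sup>2 \<le> (g x)\<^sup>2 + k * indicator {s..s+1} x"
    and bw: "\<And>x. (w x)\<^sup>2 \<le> (u x)\<^sup>2 + k * indicator {s..s+1} x"
    and k: "0 \<le> k"
  shows "Ifun (fun_form V) w \<le> Ifun (fun_form V) u + (1 + B) * k"
proof -
  have VB': "AE x in lborel. \<bar>V x\<bar> \<le> B" using VB by eventually_elim auto
  have gi: "integrable lborel (\<lambda>x. (g x)\<^sup>2)" and di: "integrable lborel (\<lambda>x. (d x)\<^sup>2)"
    using u w unfolding is_H1_deriv_def by auto
  have ii: "integrable lborel (\<lambda>x. k * indicator {s..s+1} x)"
    using ind_int by simp
  have int_ind: "(LINT x|lborel. k * indicator {s..s+1} x) = k"
    by (simp add: emeasure_lborel_Icc_eq)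
  have "dirichlet w = (LINT x|lborel. (d x)\<^sup>2)" by (rule dirichlet_eq[OF w(2)])
  also have "\<dots> \<le> (LINT x|lborel. (g x)\<^sup>2 + k * indicator {s..s+1} x)"
    using gi di ii bd by (intro integral_mono) auto
  also have "\<dots> = (LINT x|lborel. (g x)\<^sup>2) + k"
    using gi ii int_ind by simp
  also have "(LINT x|lborel. (g x)\<^sup>2) = dirichlet u" by (rule dirichlet_eq[OF u(2), symmetric])
  finally have D: "dirichlet w \<le> dirichlet u + k" .
  have ui: "integrable lborel (\<lambda>x. (u x)\<^sup>2)" and wi: "integrable lborel (\<lambda>x. (w x)\<^sup>2)"
    using u w by (auto intro: H1_sq_int)
  have "fun_form V w = (LINT x|lborel. V x * (w x)\<^sup>2)" unfolding fun_form_def ..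
  also have "\<dots> \<le> (LINT x|lborel. V x * (u x)\<^sup>2 + B * (k * indicator {s..s+1} x))"
  proof (rule integral_mono_AE)
    show "integrable lborel (\<lambda>x. V x * (w x)\<^sup>2)" by (rule Vmul_int[OF _ VB' wi]) simp
    show "integrable lborel (\<lambda>x. V x * (u x)\<^sup>2 + B * (k * indicator {s..s+1} x))"
      using Vmul_int[OF _ VB' ui] ii by simp
    show "AE x in lborel. V x * (w x)\<^sup>2 \<le> V x * (u x)\<^sup>2 + B * (k * indicator {s..s+1} x)"
      using VB
    proof eventually_elim
      case (elim x)
      have "V x * (w x)\<^sup>2 \<le> V x * ((u x)\<^sup>2 + k * indicator {s..s+1} x)"
        using elim bw[of x] by (intro mult_left_mono) auto
      also have "\<dots> = V x * (u x)\<^sup>2 + V x * (k * indicator {s..s+1} x)" by (simp add: algebra_simps)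
      also have "V x * (k * indicator {s..s+1} x) \<le> B * (k * indicator {s..s+1} x)"
        using elim k by (intro mult_right_mono) auto
      finally show ?case by simp
    qed
  qed
  also have "\<dots> = (LINT x|lborel. V x * (u x)\<^sup>2) + B * k"
    using Vmul_int[OF _ VB' ui] ii int_ind by simp
  finally have F: "fun_form V w \<le> fun_form V u + B * k" unfolding fun_form_def .
  show ?thesis using D F unfolding Ifun_def by (simp add: algebra_simps)
qed



lemma pw_bound:
  fixes m d p wx :: real
  assumes "0 < d" "1 \<le> p" "wx\<^sup>2 \<le> 1"
  shows "\<bar>m\<bar> * wx\<^sup>2 \<le> d * wx\<^sup>2 + (d / d powr p) * \<bar>m\<bar> powr p"
proof (cases "\<bar>m\<bar> \<le> d")
  case True
  have "\<bar>m\<bar> * wx\<^sup>2 \<le> d * wx\<^sup>2" using True by (intro mult_right_mono) auto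
  moreover have "0 \<le> (d / d powr p) * \<bar>m\<bar> powr p" using assms by simp
  ultimately show ?thesis by linarith
next
  case False
  have "\<bar>m\<bar> * wx\<^sup>2 \<le> \<bar>m\<bar> * 1" using assms by (intro mult_left_mono) auto
  also have "\<bar>m\<bar> = d * (\<bar>m\<bar> / d)" using assms by simp
  also have "\<bar>m\<bar> / d \<le> (\<bar>m\<bar> / d) powr p"
  proof -
    have "1 \<le> \<bar>m\<bar> / d" using False assms by simp
    then have "(\<bar>m\<bar> / d) powr 1 \<le> (\<bar>m\<bar> / d) powr p" using assms by (intro powr_mono) auto
    moreover have "(\<bar>m\<bar> / d) powr 1 = \<bar>m\<bar> / d" using \<open>1 \<le> \<bar>m\<bar> / d\<close> by (intro powr_one) linarith
    ultimately show ?thesis by linarith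
  qed
  also have "(\<bar>m\<bar> / d) powr p = \<bar>m\<bar> powr p / d powr p" by (rule powr_divide)
  finally have "\<bar>m\<bar> * wx\<^sup>2 \<le> d / d powr p * \<bar>m\<bar> powr p" using assms by (simp add: mult_left_mono)
  moreover have "0 \<le> d * wx\<^sup>2" using assms by simp
  ultimately show ?thesis by linarith
qed

lemma mu_tail:
  fixes \<mu>0 :: "real \<Rightarrow> real" and \<nu>p \<nu>n :: "real measure" and p S0 \<epsilon> :: real
  assumes mu0_meas[measurable]: "\<mu>0 \<in> borel_measurable lborel"
    and mu0_Lp: "integrable lborel (\<lambda>x. \<bar>\<mu>0 x\<bar> powr p)" and p: "1 \<le> p"
    and nup: "sets \<nu>p = sets borel" "finite_measure \<nu>p"
    and nun: "sets \<nu>n = sets borel" "finite_measure \<nu>n"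
    and S0: "0 \<le> S0" and e: "0 < \<epsilon>"
  shows "\<exists>R. \<forall>w\<in>H1. (\<forall>x. \<bar>w x\<bar> \<le> 1) \<longrightarrow> (\<forall>x. \<bar>x\<bar> \<le> R \<longrightarrow> w x = 0) \<longrightarrow>
            (LINT x|lborel. (w x)\<^sup>2) \<le> S0 \<longrightarrow>
            fun_form \<mu>0 w + meas_form \<nu>p w - meas_form \<nu>n w \<le> \<epsilon>"
proof -
  define d where "d = \<epsilon> / (3 * (S0 + 1))"
  have d: "0 < d" "d * S0 \<le> \<epsilon> / 3" using e S0 by (auto simp: d_def field_simps)
  define K where "K = d / d powr p"
  have K: "0 \<le> K" using d by (simp add: K_def)
  define T where "T t = (LINT x|lborel. \<bar>\<mu>0 x\<bar> powr p * indicator {x. t < \<bar>x\<bar>} x)" for t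
  have Tlim: "(T \<longlongrightarrow> 0) at_top"
  proof -
    have a1: "(\<lambda>x. 0::real) \<in> borel_measurable lborel" by simp
    have a2: "(\<lambda>x. \<bar>\<mu>0 x\<bar> powr p * indicat_real {x. t < \<bar>x\<bar>} x) \<in> borel_measurable lborel" for t
      by measurable
    have a4: "AE x in lborel. ((\<lambda>t. \<bar>\<mu>0 x\<bar> powr p * indicat_real {x. t < \<bar>x\<bar>} x) \<longlongrightarrow> 0) at_top"
    proof (rule AE_I2)
      fix x :: real
      have "eventually (\<lambda>t. \<bar>\<mu>0 x\<bar> powr p * indicat_real {x. t < \<bar>x\<bar>} x = 0) at_top"
        using eventually_ge_at_top[of "\<bar>x\<bar>"] by eventually_elim (auto simp: indicator_def)
      then show "((\<lambda>t. \<bar>\<mu>0 x\<bar> powr p * indicat_real {x. t < \<bar>x\<bar>} x) \<longlongrightarrow> 0) at_top"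
        by (rule tendsto_eventually)
    qed
    have a5: "\<forall>\<^sub>F t in at_top. AE x in lborel. norm (\<bar>\<mu>0 x\<bar> powr p * indicat_real {x. t < \<bar>x\<bar>} x) \<le> \<bar>\<mu>0 x\<bar> powr p"
      by (intro always_eventually allI AE_I2) (auto simp: indicator_def)
    note X = integral_dominated_convergence_at_top[OF a1 a2 mu0_Lp a4 a5]
    then show ?thesis using X unfolding T_def by simp
  qed
  then have "eventually (\<lambda>t. K * T t < \<epsilon> / 3) at_top"
    using e K by (intro order_tendstoD) (auto intro!: tendsto_mult_right_zero)
  then obtain T0 where T0: "\<And>t. T0 \<le> t \<Longrightarrow> K * T t < \<epsilon> / 3"
    by (auto simp: eventually_at_top_linorder)
  interpret P: finite_measure \<nu>p by (rule nup(2))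
  interpret N: finite_measure \<nu>n by (rule nun(2))
  define A where "A n = {x::real. real n < \<bar>x\<bar>}" for n :: nat
  have "(\<lambda>n. measure \<nu>p (A n)) \<longlonglongrightarrow> measure \<nu>p (\<Inter>n. A n)"
  proof (rule P.finite_Lim_measure_decseq)
    show "range A \<subseteq> sets \<nu>p" unfolding A_def nup(1) by auto
    show "decseq A" unfolding A_def decseq_def by auto
  qed
  moreover have "(\<Inter>n. A n) = {}"
  proof -
    have "x \<notin> (\<Inter>n. A n)" for x
    proof -
      obtain n :: nat where "\<bar>x\<bar> \<le> real n" using real_arch_simple by blast
      then show ?thesis unfolding A_def by (auto intro!: exI[of _ n])
    qed
    then show ?thesis by auto
  qed
  ultimately have "(\<lambda>n. measure \<nu>p (A n)) \<longlonglongrightarrow> 0" by simp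
  then have "eventually (\<lambda>n. measure \<nu>p (A n) < \<epsilon> / 3) sequentially"
    using e by (intro order_tendstoD) auto
  then obtain N0 where N0: "\<And>n. N0 \<le> n \<Longrightarrow> measure \<nu>p (A n) < \<epsilon> / 3"
    by (auto simp: eventually_sequentially)
  define n where "n = max N0 (nat \<lceil>T0\<rceil>)"
  define R where "R = real n"
  have KT: "K * T R < \<epsilon> / 3" using T0[of R] unfolding R_def n_def by linarith
  have MA: "measure \<nu>p (A n) < \<epsilon> / 3" using N0[of n] unfolding n_def by simp
  show ?thesis
  proof (intro exI[of _ R] ballI impI)
    fix w assume w: "w \<in> H1" and w1: "\<forall>x. \<bar>w x\<bar> \<le> 1" and w0: "\<forall>x. \<bar>x\<bar> \<le> R \<longrightarrow> w x = 0"
      and wS: "(LINT x|lborel. (w x)\<^sup>2) \<le> S0"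
    have wm[measurable]: "w \<in> borel_measurable lborel" using H1_meas[OF w] .
    have wi: "integrable lborel (\<lambda>x. (w x)\<^sup>2)" using H1_sq_int[OF w] .
    have w21: "(w x)\<^sup>2 \<le> 1" for x using w1[rule_format, of x] by (simp add: abs_le_square_iff[of _ 1, simplified])
    have pw: "\<mu>0 x * (w x)\<^sup>2 \<le> d * (w x)\<^sup>2 + K * (\<bar>\<mu>0 x\<bar> powr p * indicator {x. R < \<bar>x\<bar>} x)" for x
    proof (cases "R < \<bar>x\<bar>")
      case True
      have "\<mu>0 x * (w x)\<^sup>2 \<le> \<bar>\<mu>0 x\<bar> * (w x)\<^sup>2" by (intro mult_right_mono) auto
      also have "\<dots> \<le> d * (w x)\<^sup>2 + K * \<bar>\<mu>0 x\<bar> powr p"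
        unfolding K_def using pw_bound[OF d(1) p w21[of x]] by simp
      finally show ?thesis using True by simp
    next
      case False
      then have "w x = 0" using w0 by auto
      then show ?thesis using K by simp
    qed
    have bi: "integrable lborel (\<lambda>x. d * (w x)\<^sup>2 + K * (\<bar>\<mu>0 x\<bar> powr p * indicator {x. R < \<bar>x\<bar>} x))"
      using wi mu0_Lp by (intro Bochner_Integration.integrable_add integrable_mult_right integrable_real_mult_indicator) auto
    have mi: "integrable lborel (\<lambda>x. \<mu>0 x * (w x)\<^sup>2)"
    proof (rule Bochner_Integration.integrable_bound[OF bi])
      show "(\<lambda>x. \<mu>0 x * (w x)\<^sup>2) \<in> borel_measurable lborel" by measurable
      show "AE x in lborel. norm (\<mu>0 x * (w x)\<^sup>2) \<le> norm (d * (w x)\<^sup>2 + K * (\<bar>\<mu>0 x\<bar> powr p * indicator {x. R < \<bar>x\<bar>} x))"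
      proof (rule AE_I2)
        fix x
        have "\<bar>\<mu>0 x\<bar> * (w x)\<^sup>2 \<le> d * (w x)\<^sup>2 + K * (\<bar>\<mu>0 x\<bar> powr p * indicator {x. R < \<bar>x\<bar>} x)"
        proof (cases "R < \<bar>x\<bar>")
          case True
          then show ?thesis unfolding K_def using pw_bound[OF d(1) p w21[of x]] by simp
        next
          case False
          then have "w x = 0" using w0 by auto
          then show ?thesis using K by simp
        qed
        then show "norm (\<mu>0 x * (w x)\<^sup>2) \<le> norm (d * (w x)\<^sup>2 + K * (\<bar>\<mu>0 x\<bar> powr p * indicator {x. R < \<bar>x\<bar>} x))"
          by (simp add: abs_mult)
      qed
    qed
    have "fun_form \<mu>0 w \<le> (LINT x|lborel. d * (w x)\<^sup>2 + K * (\<bar>\<mu>0 x\<bar> powr p * indicator {x. R < \<bar>x\<bar>} x))"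
      unfolding fun_form_def using mi bi pw by (intro integral_mono) auto
    also have "\<dots> = d * (LINT x|lborel. (w x)\<^sup>2) + K * T R"
      using wi mu0_Lp unfolding T_def
      by (subst Bochner_Integration.integral_add) (auto intro!: integrable_real_mult_indicator)
    also have "\<dots> \<le> d * S0 + K * T R" using wS d by (simp add: mult_left_mono)
    finally have F1: "fun_form \<mu>0 w \<le> 2 * \<epsilon> / 3" using d KT by linarith
    have wmb: "w \<in> borel_measurable borel" using wm by simp
    have wP[measurable]: "w \<in> borel_measurable \<nu>p" using wmb measurable_cong_sets[OF nup(1) refl] by blast
    have wN[measurable]: "w \<in> borel_measurable \<nu>n" using wmb measurable_cong_sets[OF nun(1) refl] by blast
    have AP: "A n \<in> sets \<nu>p" unfolding nup(1) A_def by auto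
    have "meas_form \<nu>p w \<le> (\<integral>x. indicator (A n) x \<partial>\<nu>p)"
      unfolding meas_form_def
    proof (rule integral_mono)
      show "integrable \<nu>p (\<lambda>x. (w x)\<^sup>2)"
        by (rule P.integrable_const_bound[where B=1]) (use w21 in auto)
      show "integrable \<nu>p (indicat_real (A n))" using AP
        by (intro integrable_real_indicator) (auto simp: P.emeasure_eq_measure)
      show "(w x)\<^sup>2 \<le> indicat_real (A n) x" for x
      proof (cases "x \<in> A n")
        case True then show ?thesis using w21[of x] by simp
      next
        case False
        then have "\<bar>x\<bar> \<le> R" unfolding A_def R_def by auto
        then show ?thesis using w0 False by simp
      qed
    qed
    also have "\<dots> = measure \<nu>p (A n)" using AP by (simp add: P.emeasure_eq_measure)
    finally have F2: "meas_form \<nu>p w \<le> \<epsilon> / 3" using MA by simp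
    have F3: "0 \<le> meas_form \<nu>n w" unfolding meas_form_def by simp
    show "fun_form \<mu>0 w + meas_form \<nu>p w - meas_form \<nu>n w \<le> \<epsilon>" using F1 F2 F3 by linarith
  qed
qed



lemma find_small:
  assumes u: "u \<in> H1" and S: "(LINT x|lborel. (u x)\<^sup>2) \<le> S0" and d: "0 < \<delta>"
  shows "\<exists>c. s \<le> c \<and> c \<le> s + (S0 / \<delta> + 1) \<and> (u c)\<^sup>2 \<le> \<delta>"
proof (rule ccontr)
  assume "\<not> ?thesis"
  then have big: "\<And>c. c \<in> {s..s + (S0 / \<delta> + 1)} \<Longrightarrow> \<delta> < (u c)\<^sup>2" by force
  have "0 \<le> (LINT x|lborel. (u x)\<^sup>2)" by simp
  then have S0: "0 \<le> S0" using S by linarith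
  define T where "T = S0 / \<delta> + 1"
  have T: "0 \<le> T" using S0 d by (simp add: T_def)
  have "\<delta> * T = (LINT x|lborel. \<delta> * indicator {s..s+T} x)"
    using T by (simp add: emeasure_lborel_Icc_eq)
  also have "\<dots> \<le> (LINT x|lborel. (u x)\<^sup>2)"
  proof (rule integral_mono)
    show "integrable lborel (\<lambda>x. \<delta> * indicat_real {s..s + T} x)" using ind_int by simp
    show "integrable lborel (\<lambda>x. (u x)\<^sup>2)" using H1_sq_int[OF u] .
    show "\<delta> * indicat_real {s..s + T} x \<le> (u x)\<^sup>2" for x
      using big[of x] unfolding T_def by (cases "x \<in> {s..s + (S0 / \<delta> + 1)}") auto
  qed
  also have "\<dots> \<le> S0" by (rule S)
  finally have "\<delta> * T \<le> S0" .
  moreover have "\<delta> * T = S0 + \<delta>" using d by (simp add: T_def field_simps)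
  ultimately show False using d by simp
qed

lemma H1_deriv_ex: "u \<in> H1 \<Longrightarrow> is_H1_deriv u (H1_deriv u)"
proof -
  assume "u \<in> H1"
  then obtain g where "is_H1_deriv u g" unfolding H1_def by auto
  then show ?thesis unfolding H1_deriv_def by (rule someI[of "is_H1_deriv u" g])
qed

lemma step_R:
  fixes V :: "real \<Rightarrow> real"
  assumes Vm[measurable]: "V \<in> borel_measurable lborel"
    and VB: "AE x in lborel. 0 \<le> V x \<and> V x \<le> B"
    and u: "u \<in> Kset a" and uc: "(u c)\<^sup>2 \<le> \<delta>" and ca: "c < a" and B: "0 \<le> B"
  shows "\<exists>w. w \<in> H1 \<and> (\<forall>x. \<bar>w x\<bar> \<le> 1) \<and> w a = 1 \<and> (\<forall>x. x \<le> c - 1 \<longrightarrow> w x = 0) \<and>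
             Ifun (fun_form V) w \<le> Ifun (fun_form V) u + (1 + B) * \<delta>"
proof -
  have uH: "u \<in> H1" and ua: "u a = 1" and us: "sup_norm u = 1" using u unfolding Kset_def by auto
  have u1: "\<bar>u x\<bar> \<le> 1" for x using H1_sup_norm_le[OF uH, of x] us by simp
  define g where "g = H1_deriv u"
  have gd: "is_H1_deriv u g" unfolding g_def by (rule H1_deriv_ex[OF uH])
  have um[measurable]: "u \<in> borel_measurable lborel" using H1_meas[OF uH] .
  have gm[measurable]: "g \<in> borel_measurable lborel" and gi: "integrable lborel (\<lambda>x. (g x)\<^sup>2)"
    using gd unfolding is_H1_deriv_def by auto
  have wm: "cutR u c \<in> borel_measurable lborel" unfolding cutR_def by measurable
  have dm: "dcutR u g c \<in> borel_measurable lborel" unfolding dcutR_def by measurable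
  have wi: "integrable lborel (\<lambda>x. (cutR u c x)\<^sup>2)"
    by (rule sq_bound_integrable[OF wm _ cutR_bounds(1)])
       (use H1_sq_int[OF uH] ind_int in auto)
  have di: "integrable lborel (\<lambda>x. (dcutR u g c x)\<^sup>2)"
    by (rule sq_bound_integrable[OF dm _ cutR_bounds(2)])
       (use gi ind_int in auto)
  note wH = mk_H1[OF cutR_ftc[OF H1_ftc[OF gd]] wm dm wi di]
  have E: "Ifun (fun_form V) (cutR u c) \<le> Ifun (fun_form V) u + (1 + B) * (u c)\<^sup>2"
    using energy[OF Vm VB uH gd wH(1) wH(2), of "(u c)\<^sup>2" "c - 1"] cutR_bounds by simp
  have "(1 + B) * (u c)\<^sup>2 \<le> (1 + B) * \<delta>" using uc B by (intro mult_left_mono) auto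
  with E have E2: "Ifun (fun_form V) (cutR u c) \<le> Ifun (fun_form V) u + (1 + B) * \<delta>" by linarith
  show ?thesis
  proof (intro exI[of _ "cutR u c"] conjI allI impI)
    show "cutR u c \<in> H1" by (rule wH(1))
    show "\<bar>cutR u c x\<bar> \<le> 1" for x using cutR_abs[OF u1] .
    show "cutR u c a = 1" using ca ua unfolding cutR_def by simp
    show "cutR u c x = 0" if "x \<le> c - 1" for x using that unfolding cutR_def by simp
  qed (rule E2)
qed

lemma step_L:
  fixes V :: "real \<Rightarrow> real"
  assumes Vm[measurable]: "V \<in> borel_measurable lborel"
    and VB: "AE x in lborel. 0 \<le> V x \<and> V x \<le> B"
    and u: "u \<in> Kset a" and uc: "(u c)\<^sup>2 \<le> \<delta>" and ca: "a \<le> c" and B: "0 \<le> B"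
  shows "\<exists>w. w \<in> H1 \<and> (\<forall>x. \<bar>w x\<bar> \<le> 1) \<and> w a = 1 \<and> (\<forall>x. c + 1 \<le> x \<longrightarrow> w x = 0) \<and>
             Ifun (fun_form V) w \<le> Ifun (fun_form V) u + (1 + B) * \<delta>"
proof -
  have uH: "u \<in> H1" and ua: "u a = 1" and us: "sup_norm u = 1" using u unfolding Kset_def by auto
  have u1: "\<bar>u x\<bar> \<le> 1" for x using H1_sup_norm_le[OF uH, of x] us by simp
  define g where "g = H1_deriv u"
  have gd: "is_H1_deriv u g" unfolding g_def by (rule H1_deriv_ex[OF uH])
  have um[measurable]: "u \<in> borel_measurable lborel" using H1_meas[OF uH] .
  have gm[measurable]: "g \<in> borel_measurable lborel" and gi: "integrable lborel (\<lambda>x. (g x)\<^sup>2)"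
    using gd unfolding is_H1_deriv_def by auto
  have wm: "cutL u c \<in> borel_measurable lborel" unfolding cutL_def by measurable
  have dm: "dcutL u g c \<in> borel_measurable lborel" unfolding dcutL_def by measurable
  have wi: "integrable lborel (\<lambda>x. (cutL u c x)\<^sup>2)"
    by (rule sq_bound_integrable[OF wm _ cutL_bounds(1)])
       (use H1_sq_int[OF uH] ind_int in auto)
  have di: "integrable lborel (\<lambda>x. (dcutL u g c x)\<^sup>2)"
    by (rule sq_bound_integrable[OF dm _ cutL_bounds(2)])
       (use gi ind_int in auto)
  note wH = mk_H1[OF cutL_ftc[OF H1_ftc[OF gd]] wm dm wi di]
  have E: "Ifun (fun_form V) (cutL u c) \<le> Ifun (fun_form V) u + (1 + B) * (u c)\<^sup>2"
    using energy[OF Vm VB uH gd wH(1) wH(2), of "(u c)\<^sup>2" "c"] cutL_bounds by simp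
  have "(1 + B) * (u c)\<^sup>2 \<le> (1 + B) * \<delta>" using uc B by (intro mult_left_mono) auto
  with E have E2: "Ifun (fun_form V) (cutL u c) \<le> Ifun (fun_form V) u + (1 + B) * \<delta>" by linarith
  show ?thesis
  proof (intro exI[of _ "cutL u c"] conjI allI impI)
    show "cutL u c \<in> H1" by (rule wH(1))
    show "\<bar>cutL u c x\<bar> \<le> 1" for x using cutL_abs[OF u1] .
    show "cutL u c a = 1" using ca ua unfolding cutL_def by simp
    show "cutL u c x = 0" if "c + 1 \<le> x" for x using that unfolding cutL_def by simp
  qed (rule E2)
qed



theorem theorem4p4:
  fixes V \<mu>0 :: "real \<Rightarrow> real" and \<nu>p \<nu>n :: "real measure" and p :: real
  assumes V_meas: "V \<in> borel_measurable lborel"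
    and V_bdd: "\<exists>C. AE x in lborel. \<bar>V x\<bar> \<le> C"
    and V_pos: "\<exists>c>0. AE x in lborel. c \<le> V x"
    and lim: "((\<lambda>a. Ffun a (fun_form V)) \<longlongrightarrow> mval (fun_form V)) at_top \<or>
              ((\<lambda>a. Ffun a (fun_form V)) \<longlongrightarrow> mval (fun_form V)) at_bot"
    and p: "1 \<le> p"
    and mu0_meas: "\<mu>0 \<in> borel_measurable lborel"
    and mu0_Lp: "integrable lborel (\<lambda>x. \<bar>\<mu>0 x\<bar> powr p)"
    and nup: "sets \<nu>p = sets borel" "finite_measure \<nu>p"
    and nun: "sets \<nu>n = sets borel" "finite_measure \<nu>n"
    and mu_nonneg: "\<forall>u\<in>H1. 0 \<le> fun_form \<mu>0 u + meas_form \<nu>p u - meas_form \<nu>n u"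
  shows "mval (\<lambda>u. fun_form V u + (fun_form \<mu>0 u + meas_form \<nu>p u - meas_form \<nu>n u))
           = mval (fun_form V) \<and>
         Mset (\<lambda>u. fun_form V u + (fun_form \<mu>0 u + meas_form \<nu>p u - meas_form \<nu>n u))
           \<subseteq> Mset (fun_form V)"
proof -
  note Vm[measurable] = V_meas
  define Q where "Q = fun_form V"
  define mu where "mu u = fun_form \<mu>0 u + meas_form \<nu>p u - meas_form \<nu>n u" for u
  define Q' where "Q' = (\<lambda>u. fun_form V u + (fun_form \<mu>0 u + meas_form \<nu>p u - meas_form \<nu>n u))"
  obtain c0 where c0: "c0 > 0" "AE x in lborel. c0 \<le> V x" using V_pos by auto
  obtain C where C: "AE x in lborel. \<bar>V x\<bar> \<le> C" using V_bdd by auto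
  define B where "B = max C 0"
  have B0: "0 \<le> B" by (simp add: B_def)
  have VB: "AE x in lborel. 0 \<le> V x \<and> V x \<le> B" using c0(2) C
    by eventually_elim (use c0(1) in \<open>auto simp: B_def\<close>)
  have VB': "AE x in lborel. \<bar>V x\<bar> \<le> B" using VB by eventually_elim auto
  have dir_nn: "0 \<le> dirichlet u" for u unfolding dirichlet_def by simp
  have Qlow: "c0 * (LINT x|lborel. (u x)\<^sup>2) \<le> Q u" if "u \<in> H1" for u
    unfolding Q_def by (rule fun_form_lower[OF Vm VB' c0(2) that])
  have IQ_nn: "0 \<le> Ifun Q u" if "u \<in> H1" for u
  proof -
    have "0 \<le> c0 * (LINT x|lborel. (u x)\<^sup>2)" using c0(1) by simp
    then show ?thesis using Qlow[OF that] dir_nn[of u] unfolding Ifun_def by linarith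
  qed
  have IQ'_eq: "Ifun Q' u = Ifun Q u + mu u" for u by (simp add: Ifun_def Q'_def Q_def mu_def)
  have mu_nn: "0 \<le> mu u" if "u \<in> H1" for u using mu_nonneg that unfolding mu_def by blast
  define S where "S = {Ifun Q u / (sup_norm u)\<^sup>2 | u. u \<in> H1 \<and> u \<noteq> (\<lambda>x. 0)}"
  define S' where "S' = {Ifun Q' u / (sup_norm u)\<^sup>2 | u. u \<in> H1 \<and> u \<noteq> (\<lambda>x. 0)}"
  have mS: "mval Q = Inf S" "mval Q' = Inf S'" unfolding mval_def S_def S'_def by simp_all
  have ratio_nn: "0 \<le> Ifun Q u / (sup_norm u)\<^sup>2" if "u \<in> H1" for u
    using IQ_nn[OF that] by simp
  have ratio_le: "Ifun Q u / (sup_norm u)\<^sup>2 \<le> Ifun Q' u / (sup_norm u)\<^sup>2" if "u \<in> H1" for u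
    using mu_nn[OF that] unfolding IQ'_eq by (intro divide_right_mono) auto
  have S_lb: "bdd_below S" unfolding S_def using ratio_nn by (auto intro!: bdd_belowI[of _ 0])
  have S'_lb: "bdd_below S'" unfolding S'_def using ratio_nn ratio_le
    by (auto intro!: bdd_belowI[of _ 0] order.trans[OF ratio_nn ratio_le])
  have tent0: "tent 0 \<in> H1" "tent 0 \<noteq> (\<lambda>x. 0)"
    using tent_H1(1) tent_Kset[of 0] unfolding Kset_def by (auto dest: fun_cong[of _ _ 0])
  have S_ne: "S \<noteq> {}" unfolding S_def using tent0 by blast
  define m where "m = Inf S"
  have m0: "0 \<le> m" unfolding m_def using S_ne by (intro cInf_greatest) (auto simp: S_def intro: ratio_nn)
  have S_low: "m \<le> Ifun Q u / (sup_norm u)\<^sup>2" if "u \<in> H1" "u \<noteq> (\<lambda>x. 0)" for u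
    unfolding m_def using that S_lb by (intro cInf_lower) (auto simp: S_def)
  have key: "\<exists>w. w \<in> H1 \<and> w \<noteq> (\<lambda>x. 0) \<and> Ifun Q' w / (sup_norm w)\<^sup>2 \<le> m + \<epsilon>" if "0 < \<epsilon>" for \<epsilon>
  proof -
    define e where "e = min \<epsilon> 1"
    have e: "0 < e" "e \<le> \<epsilon>" "e \<le> 1" using that by (auto simp: e_def)
    define S0 where "S0 = (m + 1) / c0"
    have S0: "0 \<le> S0" using m0 c0 by (simp add: S0_def)
    obtain R where R: "\<forall>w\<in>H1. (\<forall>x. \<bar>w x\<bar> \<le> 1) \<longrightarrow> (\<forall>x. \<bar>x\<bar> \<le> R \<longrightarrow> w x = 0) \<longrightarrow>
            (LINT x|lborel. (w x)\<^sup>2) \<le> S0 \<longrightarrow> mu w \<le> e / 3"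
      using mu_tail[OF mu0_meas mu0_Lp p nup nun S0, of "e / 3"] e unfolding mu_def by auto
    define R1 where "R1 = \<bar>R\<bar>"
    define \<delta> where "\<delta> = e / (3 * (1 + B))"
    have \<delta>: "0 < \<delta>" "(1 + B) * \<delta> = e / 3" using e B0 by (auto simp: \<delta>_def field_simps)
    define T where "T = S0 / \<delta> + 1"
    have T: "0 \<le> T" using S0 \<delta> by (simp add: T_def)
    have L2: "(LINT x|lborel. (u x)\<^sup>2) \<le> S0" if "u \<in> H1" "Ifun Q u \<le> m + 1" for u
    proof -
      have "c0 * (LINT x|lborel. (u x)\<^sup>2) \<le> m + 1"
        using Qlow[OF that(1)] dir_nn[of u] that(2) unfolding Ifun_def by linarith
      then show ?thesis using c0(1) by (simp add: S0_def field_simps)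
    qed
    have finish: "\<exists>w. w \<in> H1 \<and> w \<noteq> (\<lambda>x. 0) \<and> Ifun Q' w / (sup_norm w)\<^sup>2 \<le> m + \<epsilon>"
      if w: "w \<in> H1" "\<forall>x. \<bar>w x\<bar> \<le> 1" "w a = 1" "\<forall>x. \<bar>x\<bar> \<le> R \<longrightarrow> w x = 0"
        "Ifun Q w \<le> m + 2 * e / 3" for w a
    proof (intro exI[of _ w] conjI)
      show "w \<in> H1" by (rule w(1))
      show "w \<noteq> (\<lambda>x. 0)" using w(3) by auto
      have sn: "sup_norm w = 1" using sup_norm_eq1[of w a] w(2,3) by auto
      have "(LINT x|lborel. (w x)\<^sup>2) \<le> S0" using L2[OF w(1)] w(5) e by linarith
      then have "mu w \<le> e / 3" using R w by blast
      then show "Ifun Q' w / (sup_norm w)\<^sup>2 \<le> m + \<epsilon>"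
        unfolding sn IQ'_eq using w(5) e by simp
    qed
    have Kne: "Kset a \<noteq> {}" for a using tent_Kset[of a] by blast
    have Kbd: "bdd_below (Ifun Q ` Kset a)" for a
      using IQ_nn by (auto intro!: bdd_belowI[of _ 0] simp: Kset_def)
    have getu: "\<exists>u\<in>Kset a. Ifun Q u < m + e / 3" if "Ffun a Q < m + e / 3" for a
      using that cInf_lessD[of "Ifun Q ` Kset a"] Kne[of a] unfolding Ffun_def by auto
    from lim show ?thesis
    proof
      assume l: "((\<lambda>a. Ffun a (fun_form V)) \<longlongrightarrow> mval (fun_form V)) at_top"
      have "eventually (\<lambda>a. Ffun a Q < m + e / 3) at_top"
        using l e unfolding Q_def[symmetric] mS m_def[symmetric] by (intro order_tendstoD) auto
      then obtain A0 where A0: "\<And>a. A0 \<le> a \<Longrightarrow> Ffun a Q < m + e / 3"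
        by (auto simp: eventually_at_top_linorder)
      define a where "a = max A0 (R1 + T + 2)"
      obtain u where u: "u \<in> Kset a" "Ifun Q u < m + e / 3" using getu[OF A0[of a]] by (auto simp: a_def)
      have uH: "u \<in> H1" using u(1) unfolding Kset_def by auto
      have "(LINT x|lborel. (u x)\<^sup>2) \<le> S0" using L2[OF uH] u(2) e by linarith
      then obtain c where c: "R1 + 1 \<le> c" "c \<le> R1 + 1 + T" "(u c)\<^sup>2 \<le> \<delta>"
        using find_small[OF uH _ \<delta>(1), of S0 "R1 + 1"] unfolding T_def by auto
      have ca: "c < a" using c unfolding a_def by linarith
      obtain w where w: "w \<in> H1" "\<forall>x. \<bar>w x\<bar> \<le> 1" "w a = 1" "\<forall>x. x \<le> c - 1 \<longrightarrow> w x = 0"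
        "Ifun Q w \<le> Ifun Q u + (1 + B) * \<delta>"
        using step_R[OF Vm VB u(1) c(3) ca B0] unfolding Q_def by blast
      show ?thesis
      proof (rule finish[OF w(1,2,3)])
        show "\<forall>x. \<bar>x\<bar> \<le> R \<longrightarrow> w x = 0" using w(4) c(1) unfolding R1_def by force
        show "Ifun Q w \<le> m + 2 * e / 3" using w(5) u(2) \<delta>(2) by linarith
      qed
    next
      assume l: "((\<lambda>a. Ffun a (fun_form V)) \<longlongrightarrow> mval (fun_form V)) at_bot"
      have "eventually (\<lambda>a. Ffun a Q < m + e / 3) at_bot"
        using l e unfolding Q_def[symmetric] mS m_def[symmetric] by (intro order_tendstoD) auto
      then obtain A0 where A0: "\<And>a. a \<le> A0 \<Longrightarrow> Ffun a Q < m + e / 3"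
        by (auto simp: eventually_at_bot_linorder)
      define a where "a = min A0 (- R1 - T - 2)"
      obtain u where u: "u \<in> Kset a" "Ifun Q u < m + e / 3" using getu[OF A0[of a]] by (auto simp: a_def)
      have uH: "u \<in> H1" using u(1) unfolding Kset_def by auto
      have "(LINT x|lborel. (u x)\<^sup>2) \<le> S0" using L2[OF uH] u(2) e by linarith
      then obtain c where c: "- R1 - 1 - T \<le> c" "c \<le> - R1 - 1 - T + T" "(u c)\<^sup>2 \<le> \<delta>"
        using find_small[OF uH _ \<delta>(1), of S0 "- R1 - 1 - T"] unfolding T_def by auto
      have ca: "a \<le> c" using c unfolding a_def by linarith
      obtain w where w: "w \<in> H1" "\<forall>x. \<bar>w x\<bar> \<le> 1" "w a = 1" "\<forall>x. c + 1 \<le> x \<longrightarrow> w x = 0"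
        "Ifun Q w \<le> Ifun Q u + (1 + B) * \<delta>"
        using step_L[OF Vm VB u(1) c(3) ca B0] unfolding Q_def by blast
      show ?thesis
      proof (rule finish[OF w(1,2,3)])
        show "\<forall>x. \<bar>x\<bar> \<le> R \<longrightarrow> w x = 0" using w(4) c(2) unfolding R1_def by force
        show "Ifun Q w \<le> m + 2 * e / 3" using w(5) u(2) \<delta>(2) by linarith
      qed
    qed
  qed
  have S'_ne: "S' \<noteq> {}" using key[of 1] unfolding S'_def by auto
  have le1: "Inf S' \<le> m"
  proof (rule field_le_epsilon)
    fix \<epsilon> :: real assume "0 < \<epsilon>"
    then obtain w where w: "w \<in> H1" "w \<noteq> (\<lambda>x. 0)" "Ifun Q' w / (sup_norm w)\<^sup>2 \<le> m + \<epsilon>"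
      using key by blast
    have "Inf S' \<le> Ifun Q' w / (sup_norm w)\<^sup>2"
      using w S'_lb by (intro cInf_lower) (auto simp: S'_def)
    then show "Inf S' \<le> m + \<epsilon>" using w(3) by linarith
  qed
  have le2: "m \<le> Inf S'"
    unfolding m_def
  proof (rule cInf_mono[OF S'_ne S_lb])
    fix b assume "b \<in> S'"
    then obtain u where "u \<in> H1" "u \<noteq> (\<lambda>x. 0)" "b = Ifun Q' u / (sup_norm u)\<^sup>2"
      unfolding S'_def by auto
    then show "\<exists>a\<in>S. a \<le> b" using ratio_le unfolding S_def by blast
  qed
  have eq: "mval Q' = mval Q" using le1 le2 mS unfolding m_def by simp
  have sub: "Mset Q' \<subseteq> Mset Q"
  proof
    fix u assume "u \<in> Mset Q'"
    then have u: "u \<in> H1" "u \<noteq> (\<lambda>x. 0)" "Ifun Q' u / (sup_norm u)\<^sup>2 = mval Q'"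
      unfolding Mset_def by auto
    have "Ifun Q u / (sup_norm u)\<^sup>2 \<le> mval Q" using ratio_le[OF u(1)] u(3) eq by simp
    moreover have "mval Q \<le> Ifun Q u / (sup_norm u)\<^sup>2" using S_low[OF u(1,2)] mS m_def by simp
    ultimately show "u \<in> Mset Q" using u unfolding Mset_def by auto
  qed
  show ?thesis using eq sub unfolding Q'_def Q_def by simp
qed


end
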